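(* Let $d\ge1$ and let $a(t)=\sum_{n\ge0}a_nt^n=\frac{h_0(a)+\cdots+h_\lambda(a)t^\lambda}{(1-t)^d}$ be a rational formal power series with integer coefficients, $h_\lambda(a)\ne0$. If $h_i(a)\ge0$ for $0\le i\le\lambda$, then for every $0\le i\le\lfloor d/2\rfloor$, $g_i(a)\le g_i(a^{\langle d\rangle})\le g_i(a^{\langle d+1\rangle})\le g_i(a^{\langle d+2\rangle})\le\cdots$.
   Context: One sets $h_i(a)=0$ for $i>\lambda$. For an integer $r\ge1$, the $r$-th Veronese series is $a^{\langle r\rangle}(t)=\sum_{n\ge0}a_{nr}t^n$; it can again be written as $\frac{h_0(a^{\langle r\rangle})+\cdots+h_{\lambda'}(a^{\langle r\rangle})t^{\lambda'}}{(1-t)^d}$ with the same $d$ and polynomial numerator, with $h_i(a^{\langle r\rangle})=0$ beyond its degree. For any such series $b(t)$ the $g$-vector entries are $g_0(b)=h_0(b)$ and $g_i(b)=h_i(b)-h_{i-1}(b)$ for $i\ge1$. *)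

theory Defs
  imports "HOL-Computational_Algebra.Computational_Algebra"
begin

definition veronese :: "nat \<Rightarrow> int fps \<Rightarrow> int fps" where
  "veronese r b = Abs_fps (\<lambda>n. b $ (n * r))"

text \<open>h-vector of a series b(t) = (h_0 + ... )/(1-t)^d: the numerator is (1-t)^d b(t),
  so h_i(b) is its i-th coefficient (automatically 0 beyond the degree).\<close>
definition hvec :: "nat \<Rightarrow> int fps \<Rightarrow> nat \<Rightarrow> int" where
  "hvec d b i = (b * (1 - fps_X) ^ d) $ i"

definition gvec :: "nat \<Rightarrow> int fps \<Rightarrow> nat \<Rightarrow> int" where
  "gvec d b i = (if i = 0 then hvec d b 0 else hvec d b i - hvec d b (i - 1))"

end

theory Submission
  imports Defs
begin


definition conv :: "nat \<Rightarrow> (int \<Rightarrow> int) \<Rightarrow> int \<Rightarrow> int" where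
  "conv s f x = (\<Sum>v<s. f (x - int v))"

definition dlt :: "int \<Rightarrow> int" where "dlt x = (if x = 0 then 1 else 0)"

definition boxf :: "nat \<Rightarrow> nat \<Rightarrow> int \<Rightarrow> int" where
  "boxf r d = (conv r ^^ d) dlt"

lemma conv_Suc1: "conv (Suc s) f x = conv s f x + f (x - int s)"
  by (simp add: conv_def)

lemma conv_Suc2: "conv (Suc s) f x = f x + conv s f (x - 1)"
  unfolding conv_def by (simp only: sum.lessThan_Suc_shift) (simp add: algebra_simps)

lemma conv_comm: "conv s (conv t f) = conv t (conv s f)"
proof (rule ext)
  fix x
  have "conv s (conv t f) x = (\<Sum>v<s. \<Sum>w<t. f (x - int v - int w))"
    by (simp add: conv_def)
  also have "\<dots> = (\<Sum>w<t. \<Sum>v<s. f (x - int v - int w))"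
    by (rule sum.swap)
  also have "\<dots> = conv t (conv s f) x"
    by (simp add: conv_def algebra_simps)
  finally show "conv s (conv t f) x = conv t (conv s f) x" .
qed

lemma funpow_conv_comm: "(conv a ^^ n) (conv b f) = conv b ((conv a ^^ n) f)"
  by (induction n) (auto simp: conv_comm)

definition UM :: "(int \<Rightarrow> int) \<Rightarrow> int \<Rightarrow> bool" where
 "UM f N \<longleftrightarrow> (\<forall>x<0. f x = 0) \<and> (\<forall>x. f x = f (N - x)) \<and> (\<forall>x. 0 \<le> f x)
     \<and> (\<forall>z. 2*z + 1 \<le> N \<longrightarrow> f z \<le> f (z+1))"

lemma chain_le:
  assumes "a \<le> b" "\<forall>z. a \<le> z \<longrightarrow> z < b \<longrightarrow> (f::int\<Rightarrow>int) z \<le> f (z+1)"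
  shows "f a \<le> f b"
  using assms
proof (induction b rule: int_ge_induct)
  case base then show ?case by simp
next
  case (step i)
  then show ?case by (metis order.trans less_add_one order_less_le_trans add.commute zless_imp_add1_zle order_refl le_less)
qed

lemma chain_less:
  assumes "a < b" "\<forall>z. a \<le> z \<longrightarrow> z < b \<longrightarrow> (f::int\<Rightarrow>int) z < f (z+1)"
  shows "f a < f b"
proof -
  have "a + 1 \<le> b" using assms by simp
  then show ?thesis using assms(2)
  proof (induction b rule: int_ge_induct)
    case base then show ?case by simp
  next
    case (step i)
    then have "f a < f i" by simp
    moreover have "f i < f (i+1)" using step by simp
    ultimately show ?case by simp
  qed
qed

lemma UM_D:
  assumes "UM f N" "y \<le> x" "x + y \<le> N"
  shows "f y \<le> f x"
proof -
  have inc: "\<And>z. 2*z + 1 \<le> N \<Longrightarrow> f z \<le> f (z+1)" and sym: "\<And>x. f x = f (N - x)"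
    using assms(1) unfolding UM_def by auto
  have case1: "f y \<le> f x'" if "y \<le> x'" "2*x' \<le> N + 1" for x'
    using chain_le[of y x' f] that inc by auto
  show ?thesis
  proof (cases "2*x \<le> N + 1")
    case True then show ?thesis using case1 assms by auto
  next
    case False
    have "f x = f (N - x)" by (rule sym)
    moreover have "f y \<le> f (N - x)" using case1[of "N - x"] False assms by auto
    ultimately show ?thesis by simp
  qed
qed

lemma UM_zero_above: "UM f N \<Longrightarrow> N < x \<Longrightarrow> f x = 0"
  unfolding UM_def by (metis diff_less_0_iff_less)

lemma UM_conv:
  assumes "UM f N" "1 \<le> s"
  shows "UM (conv s f) (N + int s - 1)"
proof -
  obtain s' where s: "s = Suc s'" using assms(2) by (cases s) auto
  have neg: "\<And>x. x < 0 \<Longrightarrow> f x = 0" and sym: "\<And>x. f x = f (N - x)" and nn: "\<And>x. 0 \<le> f x"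
    using assms(1) unfolding UM_def by auto
  have A: "\<forall>x<0. conv s f x = 0" by (auto simp: conv_def neg)
  have B: "\<forall>x. 0 \<le> conv s f x" by (auto simp: conv_def nn intro: sum_nonneg)
  have C: "conv s f x = conv s f (N + int s - 1 - x)" for x
  proof -
    have "conv s f (N + int s - 1 - x) = (\<Sum>v<s. f (x - int (s - Suc v)))"
      unfolding conv_def
    proof (rule sum.cong)
      fix v assume "v \<in> {..<s}"
      then have "int (s - Suc v) = int s - 1 - int v" by auto
      then have eq: "x - int (s - Suc v) = N - (N + int s - 1 - x - int v)" by simp
      show "f (N + int s - 1 - x - int v) = f (x - int (s - Suc v))"
        unfolding eq by (rule sym)
    qed simp
    also have "\<dots> = (\<Sum>v<s. f (x - int v))"
      by (rule sum.nat_diff_reindex[where g="\<lambda>v. f (x - int v)"])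
    finally show ?thesis by (simp add: conv_def)
  qed
  have D: "conv s f z \<le> conv s f (z+1)" if "2*z + 1 \<le> N + int s - 1" for z
  proof -
    have e1: "conv s f (z+1) = f (z+1) + conv s' f z" using conv_Suc2[of s' f "z+1"] s by simp
    have e2: "conv s f z = conv s' f z + f (z - int s')" using conv_Suc1[of s' f z] s by simp
    have "f (z - int s') \<le> f (z+1)" using UM_D[OF assms(1)] that s by auto
    then show ?thesis using e1 e2 by simp
  qed
  show ?thesis unfolding UM_def using A B C D by blast
qed

lemma UM_funpow:
  assumes "UM f N" "1 \<le> s"
  shows "UM ((conv s ^^ n) f) (N + int n * (int s - 1))"
proof (induction n)
  case 0 then show ?case using assms by simp
next
  case (Suc n)
  have "UM (conv s ((conv s ^^ n) f)) (N + int n * (int s - 1) + int s - 1)"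
    by (rule UM_conv[OF Suc assms(2)])
  then show ?case by (simp add: algebra_simps)
qed

lemma UM_dlt: "UM dlt 0"
  unfolding UM_def dlt_def by auto

lemma UM_boxf: "1 \<le> r \<Longrightarrow> UM (boxf r d) (int d * (int r - 1))"
  using UM_funpow[OF UM_dlt, of r d] by (simp add: boxf_def)

definition SU :: "(int \<Rightarrow> int) \<Rightarrow> int \<Rightarrow> bool" where
 "SU f N \<longleftrightarrow> UM f N \<and> (\<forall>z. -1 \<le> z \<longrightarrow> 2*z + 2 \<le> N \<longrightarrow> f z < f (z+1))"

lemma SU_D:
  assumes "SU f N" "y < x" "0 \<le> x" "x \<le> N" "x + y \<le> N - 1"
  shows "f y < f x"
proof -
  have U: "UM f N" and inc: "\<And>z. -1 \<le> z \<Longrightarrow> 2*z + 2 \<le> N \<Longrightarrow> f z < f (z+1)"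
    using assms(1) unfolding SU_def by auto
  have neg: "\<And>x. x < 0 \<Longrightarrow> f x = 0" and sym: "\<And>x. f x = f (N - x)"
    using U unfolding UM_def by auto
  have case1: "f y < f x'" if "y < x'" "0 \<le> x'" "2*x' \<le> N" for x'
  proof -
    define y' where "y' = max y (-1)"
    have "f y \<le> f y'"
    proof (cases "y < -1")
      case True then show ?thesis using neg[of y] neg[of "-1"] by (simp add: y'_def)
    next
      case False then show ?thesis by (simp add: y'_def)
    qed
    moreover have "f y' < f x'"
      using chain_less[of y' x' f] that inc unfolding y'_def by auto
    ultimately show ?thesis by simp
  qed
  show ?thesis
  proof (cases "2*x \<le> N")
    case True then show ?thesis using case1 assms by auto
  next
    case False
    have "f y < f (N - x)" using case1[of "N - x"] False assms by auto
    then show ?thesis using sym[of x] by simp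
  qed
qed

lemma SU_conv:
  assumes "SU f N" "1 \<le> s" "int s \<le> N + 1"
  shows "SU (conv s f) (N + int s - 1)"
proof -
  obtain s' where s: "s = Suc s'" using assms(2) by (cases s) auto
  have U: "UM f N" using assms(1) unfolding SU_def by auto
  have D: "conv s f z < conv s f (z+1)" if "-1 \<le> z" "2*z + 2 \<le> N + int s - 1" for z
  proof -
    have e1: "conv s f (z+1) = f (z+1) + conv s' f z" using conv_Suc2[of s' f "z+1"] s by simp
    have e2: "conv s f z = conv s' f z + f (z - int s')" using conv_Suc1[of s' f z] s by simp
    have "f (z - int s') < f (z+1)" using SU_D[OF assms(1)] that s assms(3) by auto
    then show ?thesis using e1 e2 by simp
  qed
  show ?thesis unfolding SU_def using UM_conv[OF U assms(2)] D by blast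
qed

lemma SU_funpow:
  assumes "SU f N" "1 \<le> s" "int s \<le> N + 1"
  shows "SU ((conv s ^^ n) f) (N + int n * (int s - 1))"
proof (induction n)
  case 0 then show ?case using assms by simp
next
  case (Suc n)
  have "int s \<le> N + int n * (int s - 1) + 1" using assms(2,3) by (simp add: order_trans)
  then have "SU (conv s ((conv s ^^ n) f)) (N + int n * (int s - 1) + int s - 1)"
    by (rule SU_conv[OF Suc assms(2)])
  then show ?case by (simp add: algebra_simps)
qed

lemma conv_dlt: "conv r dlt x = (if 0 \<le> x \<and> x < int r then 1 else 0)"
  by (induction r) (auto simp: conv_def dlt_def)

lemma SU_tent:
  assumes "1 \<le> r"
  shows "SU (conv r (conv r dlt)) (2 * int r - 2)"
proof -
  obtain r' where r: "r = Suc r'" using assms by (cases r) auto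
  have U: "UM (conv r (conv r dlt)) (2 * int r - 2)"
    using UM_conv[OF UM_conv[OF UM_dlt assms] assms] by (simp add: algebra_simps)
  have D: "conv r (conv r dlt) z < conv r (conv r dlt) (z+1)" if "-1 \<le> z" "2*z + 2 \<le> 2 * int r - 2" for z
  proof -
    have e1: "conv r (conv r dlt) (z+1) = conv r dlt (z+1) + conv r' (conv r dlt) z"
      using conv_Suc2[of r' _ "z+1"] r by simp
    have e2: "conv r (conv r dlt) z = conv r' (conv r dlt) z + conv r dlt (z - int r')"
      using conv_Suc1[of r' _ z] r by simp
    have "conv r dlt (z+1) = 1" "conv r dlt (z - int r') = 0" using that r by (auto simp: conv_dlt)
    then show ?thesis using e1 e2 by simp
  qed
  show ?thesis unfolding SU_def using U D by blast
qed

lemma SU_boxf: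
  assumes "1 \<le> r" "2 \<le> d"
  shows "SU (boxf r d) (int d * (int r - 1))"
proof -
  have dd: "d = (d - 2) + 2" using assms by simp
  have "boxf r d = (conv r ^^ (d - 2)) ((conv r ^^ 2) dlt)"
    unfolding boxf_def by (subst dd) (simp only: funpow_add comp_def)
  also have "(conv r ^^ 2) dlt = conv r (conv r dlt)" by (simp add: numeral_2_eq_2)
  finally have e: "boxf r d = (conv r ^^ (d - 2)) (conv r (conv r dlt))" .
  have "SU ((conv r ^^ (d - 2)) (conv r (conv r dlt))) (2 * int r - 2 + int (d - 2) * (int r - 1))"
    by (rule SU_funpow[OF SU_tent[OF assms(1)] assms(1)]) (use assms in simp)
  moreover have "2 * int r - 2 + int (d - 2) * (int r - 1) = int d * (int r - 1)"
    using assms by (simp add: of_nat_diff algebra_simps)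
  ultimately show ?thesis using e by simp
qed

definition qq :: "nat \<Rightarrow> nat \<Rightarrow> nat \<Rightarrow> int \<Rightarrow> int" where
  "qq r d k = (conv (Suc r) ^^ k) ((conv r ^^ (d - Suc k)) dlt)"
definition gg :: "nat \<Rightarrow> nat \<Rightarrow> nat \<Rightarrow> int \<Rightarrow> int" where
  "gg r d k = (conv (Suc r) ^^ k) ((conv r ^^ (d - k)) dlt)"

lemma gg_qq1: "k < d \<Longrightarrow> gg r d (Suc k) = conv (Suc r) (qq r d k)"
  by (simp add: gg_def qq_def)

lemma gg_qq2: "k < d \<Longrightarrow> gg r d k = conv r (qq r d k)"
proof -
  assume "k < d"
  then have "d - k = Suc (d - Suc k)" by simp
  then show ?thesis by (simp add: gg_def qq_def funpow_conv_comm)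
qed

lemma gg_Suc1: "k < d \<Longrightarrow> gg r d (Suc k) x = gg r d k x + qq r d k (x - int r)"
  by (simp add: gg_qq1 gg_qq2 conv_Suc1)

lemma gg_Suc2: "k < d \<Longrightarrow> gg r d (Suc k) x = qq r d k x + gg r d k (x - 1)"
  by (simp add: gg_qq1 gg_qq2 conv_Suc2)

lemma UM_qq:
  assumes "1 \<le> r" "k < d"
  shows "UM (qq r d k) ((int d - 1) * (int r - 1) + int k)"
proof -
  have "UM (qq r d k) (0 + int (d - Suc k) * (int r - 1) + int k * (int (Suc r) - 1))"
    unfolding qq_def by (rule UM_funpow[OF UM_funpow[OF UM_dlt assms(1)]]) simp
  moreover have "0 + int (d - Suc k) * (int r - 1) + int k * (int (Suc r) - 1) = (int d - 1) * (int r - 1) + int k"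
    using assms by (simp add: of_nat_diff algebra_simps)
  ultimately show ?thesis by simp
qed

lemma gg_0: "gg r d 0 = boxf r d" by (simp add: gg_def boxf_def)
lemma gg_d: "gg r d d = boxf (Suc r) d" by (simp add: gg_def boxf_def)

lemma mainLem:
  assumes "1 \<le> i" "i \<le> d" "1 \<le> r" "int d \<le> 2 * int r" "\<beta> \<le> \<alpha>"
    "\<alpha> + \<beta> + 2*int i \<le> (int d - 1)*int r + 1"
  shows "boxf r d \<alpha> - boxf r d \<beta> \<le> boxf (Suc r) d (\<alpha> + int i) - boxf (Suc r) d (\<beta> + int i - 1)"
proof -
  have key: "(int d - 1) * (int r - 1) = (int d - 1) * int r - int d + 1" by (simp add: algebra_simps)
  have T: "k \<le> d \<Longrightarrow> boxf r d \<alpha> - boxf r d \<beta> \<le>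
      gg r d k (\<alpha> + int (k - (d - i))) - gg r d k (\<beta> + int (k - Suc (d - i)))" for k
  proof (induction k)
    case 0 then show ?case by (simp add: gg_0)
  next
    case (Suc k)
    then have kd: "k < d" by simp
    have IH: "boxf r d \<alpha> - boxf r d \<beta> \<le>
      gg r d k (\<alpha> + int (k - (d - i))) - gg r d k (\<beta> + int (k - Suc (d - i)))"
      using Suc kd by simp
    have U: "UM (qq r d k) ((int d - 1) * int r - int d + 1 + int k)"
      using UM_qq[OF assms(3) kd] key by simp
    consider "k < d - i" | "k = d - i" | "d - i < k" by linarith
    then show ?case
    proof cases
      case 1
      then have e: "k - (d - i) = 0" "Suc k - (d - i) = 0" "k - Suc (d - i) = 0" "Suc k - Suc (d - i) = 0"
        by auto
      have "qq r d k (\<beta> - int r) \<le> qq r d k (\<alpha> - int r)"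
        by (rule UM_D[OF U]) (use assms 1 in linarith)+
      then show ?thesis using IH gg_Suc1[OF kd, of r \<alpha>] gg_Suc1[OF kd, of r \<beta>] e by simp
    next
      case 2
      then have e: "k - (d - i) = 0" "Suc k - (d - i) = 1" "k - Suc (d - i) = 0" "Suc k - Suc (d - i) = 0"
        by auto
      have "qq r d k (\<beta> - int r) \<le> qq r d k (\<alpha> + 1)"
      proof (rule UM_D[OF U])
        show "\<beta> - int r \<le> \<alpha> + 1" using assms by linarith
        have "int k = int d - int i" using 2 assms by simp
        then show "\<alpha> + 1 + (\<beta> - int r) \<le> (int d - 1) * int r - int d + 1 + int k"
          using assms by linarith
      qed
      then show ?thesis using IH gg_Suc2[OF kd, of r "\<alpha> + 1"] gg_Suc1[OF kd, of r \<beta>] e by simp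
    next
      case 3
      define u where "u = int k - int d + int i"
      have e: "int (k - (d - i)) = u" "int (Suc k - (d - i)) = u + 1"
         "int (k - Suc (d - i)) = u - 1" "int (Suc k - Suc (d - i)) = u"
        using 3 assms unfolding u_def by (auto simp: of_nat_diff)
      have "qq r d k (\<beta> + u) \<le> qq r d k (\<alpha> + u + 1)"
      proof (rule UM_D[OF U])
        show "\<beta> + u \<le> \<alpha> + u + 1" using assms by linarith
        show "\<alpha> + u + 1 + (\<beta> + u) \<le> (int d - 1) * int r - int d + 1 + int k"
          using assms kd unfolding u_def by linarith
      qed
      moreover have "gg r d (Suc k) (\<alpha> + (u + 1)) = qq r d k (\<alpha> + u + 1) + gg r d k (\<alpha> + u)"
        using gg_Suc2[OF kd, of r "\<alpha> + (u + 1)"] by (simp add: algebra_simps)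
      moreover have "gg r d (Suc k) (\<beta> + u) = qq r d k (\<beta> + u) + gg r d k (\<beta> + (u - 1))"
        using gg_Suc2[OF kd, of r "\<beta> + u"] by (simp add: algebra_simps)
      ultimately show ?thesis using IH unfolding e by linarith
    qed
  qed
  have "d - (d - i) = i" "d - Suc (d - i) = i - 1" using assms by auto
  then have "int (d - (d - i)) = int i" "int (d - Suc (d - i)) = int i - 1" using assms by auto
  then show ?thesis using T[of d] gg_d by (simp add: algebra_simps)
qed

lemma perj_mono:
  assumes "d \<le> r" "1 \<le> i" "2*i \<le> d"
  shows "boxf r d (int (i*r) - int j) - boxf r d (int ((i-1)*r) - int j)
     \<le> boxf (Suc r) d (int (i*Suc r) - int j) - boxf (Suc r) d (int ((i-1)*Suc r) - int j)"
proof -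
  define m where "m = int i * int r - int j"
  have r1: "1 \<le> r" using assms by simp
  have e1: "int (i*r) - int j = m" unfolding m_def by simp
  have e2: "int ((i-1)*r) - int j = m - int r" unfolding m_def using assms by (simp add: of_nat_diff algebra_simps)
  have e3: "int (i*Suc r) - int j = m + int i" unfolding m_def by (simp add: algebra_simps)
  have e4': "int ((i-1)*Suc r) = (int i - 1) * (int r + 1)" using assms
    by (simp only: of_nat_mult of_nat_diff) simp
  have e4: "int ((i-1)*Suc r) - int j = m - int r + int i - 1" unfolding m_def e4'
    by (simp add: algebra_simps)
  have dr: "(int d - 1) * int r = int d * int r - int r" by (simp add: algebra_simps)
  have dle: "int d \<le> 2 * int r" using assms by simp
  show ?thesis unfolding e1 e2 e3 e4
  proof (cases "2*i < d")
    case True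
    have "(2 * int i + 1) * int r \<le> int d * int r"
      using True by (intro mult_right_mono) auto
    then have "m + (m - int r) + 2 * int i \<le> (int d - 1) * int r + 1"
      unfolding m_def dr using assms True by (simp add: algebra_simps)
    then have "boxf r d m - boxf r d (m - int r) \<le> boxf (Suc r) d (m + int i) - boxf (Suc r) d (m - int r + int i - 1)"
      using mainLem[of i d r "m - int r" m] assms r1 dle by simp
    then show "boxf r d m - boxf r d (m - int r) \<le> boxf (Suc r) d (m + int i) - boxf (Suc r) d (m - int r + int i - 1)" .
  next
    case False
    then have d2: "int d = 2 * int i" using assms by simp
    define \<alpha> where "\<alpha> = int i * int r - 2 * int i + int j"
    have s1: "boxf r d m = boxf r d \<alpha>"
    proof -
      have "boxf r d m = boxf r d (int d * (int r - 1) - m)"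
        using UM_boxf[OF r1, of d] unfolding UM_def by blast
      also have "int d * (int r - 1) - m = \<alpha>" unfolding \<alpha>_def m_def d2 by (simp add: algebra_simps)
      finally show ?thesis .
    qed
    have s2: "boxf (Suc r) d (m + int i) = boxf (Suc r) d (\<alpha> + int i)"
    proof -
      have "boxf (Suc r) d (m + int i) = boxf (Suc r) d (int d * (int (Suc r) - 1) - (m + int i))"
        using UM_boxf[of "Suc r" d] unfolding UM_def by simp
      also have "int d * (int (Suc r) - 1) - (m + int i) = \<alpha> + int i"
        unfolding \<alpha>_def m_def d2 by (simp add: algebra_simps)
      finally show ?thesis .
    qed
    have c1: "m - int r \<le> \<alpha>" unfolding m_def \<alpha>_def using assms by linarith
    have c2: "\<alpha> + (m - int r) + 2 * int i \<le> (int d - 1) * int r + 1"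
      unfolding m_def \<alpha>_def dr d2 by (simp add: algebra_simps)
    have "boxf r d \<alpha> - boxf r d (m - int r) \<le> boxf (Suc r) d (\<alpha> + int i) - boxf (Suc r) d (m - int r + int i - 1)"
      using mainLem[of i d r "m - int r" \<alpha>] assms r1 dle c1 c2 by simp
    then show "boxf r d m - boxf r d (m - int r) \<le> boxf (Suc r) d (m + int i) - boxf (Suc r) d (m - int r + int i - 1)"
      using s1 s2 by simp
  qed
qed

lemma perj_base:
  assumes "1 \<le> i" "2*i \<le> d"
  shows "0 \<le> boxf d d (int (i*d) - int j) - boxf d d (int ((i-1)*d) - int j)"
    and "1 \<le> boxf d d (int (i*d) - int i) - boxf d d (int ((i-1)*d) - int i)"
proof -
  have d1: "1 \<le> d" "2 \<le> d" using assms by auto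
  have e1: "int ((i-1)*d) = int i * int d - int d" using assms by (simp add: of_nat_diff algebra_simps)
  have m: "2 * int i * int d \<le> int d * int d"
    using assms by (intro mult_right_mono) auto
  show "0 \<le> boxf d d (int (i*d) - int j) - boxf d d (int ((i-1)*d) - int j)"
  proof -
    have "boxf d d (int ((i-1)*d) - int j) \<le> boxf d d (int (i*d) - int j)"
    proof (rule UM_D[OF UM_boxf[OF d1(1)]])
      show "int ((i-1)*d) - int j \<le> int (i*d) - int j" unfolding e1 by simp
      show "int (i*d) - int j + (int ((i-1)*d) - int j) \<le> int d * (int d - 1)"
        unfolding e1 using m by (simp add: algebra_simps)
    qed
    then show ?thesis by simp
  qed
  show "1 \<le> boxf d d (int (i*d) - int i) - boxf d d (int ((i-1)*d) - int i)"
  proof -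
    have p: "0 \<le> (int d - int i) * (int d - 1)" using assms by (intro mult_nonneg_nonneg) auto
    have q: "int i \<le> int i * int d" using assms by simp
    have "boxf d d (int ((i-1)*d) - int i) < boxf d d (int (i*d) - int i)"
    proof (rule SU_D[OF SU_boxf[OF d1]])
      show "int ((i-1)*d) - int i < int (i*d) - int i" unfolding e1 using d1 by simp
      show "0 \<le> int (i*d) - int i" using q by simp
      show "int (i*d) - int i \<le> int d * (int d - 1)" using p by (simp add: algebra_simps)
      show "int (i*d) - int i + (int ((i-1)*d) - int i) \<le> int d * (int d - 1) - 1"
        unfolding e1 unfolding of_nat_mult
        using m assms right_diff_distrib[of "int d" "int d" 1] by linarith
    qed
    then show ?thesis by simp
  qed
qed



lemma boxf_neg: "x < 0 \<Longrightarrow> boxf r d x = 0"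
proof (induction d arbitrary: x)
  case 0 then show ?case by (simp add: boxf_def dlt_def)
next
  case (Suc d)
  then show ?case by (simp add: boxf_def conv_def)
qed

definition G :: "nat \<Rightarrow> int fps" where "G r = (\<Sum>v<r. fps_X ^ v)"

lemma G_mult_nth:
  assumes "\<forall>n. \<phi> (int n) = F $ n" "\<forall>x<0. \<phi> x = 0"
  shows "(F * G s) $ n = conv s \<phi> (int n)"
proof -
  have "(F * G s) $ n = (\<Sum>v<s. (F * fps_X ^ v) $ n)"
    by (simp add: G_def sum_distrib_left fps_sum_nth)
  also have "\<dots> = (\<Sum>v<s. \<phi> (int n - int v))"
  proof (rule sum.cong)
    fix v assume "v \<in> {..<s}"
    show "(F * fps_X ^ v) $ n = \<phi> (int n - int v)"
    proof (cases "n < v")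
      case True then show ?thesis using assms by (simp add: fps_X_power_mult_right_nth)
    next
      case False
      then have "int n - int v = int (n - v)" by simp
      then have "\<phi> (int n - int v) = F $ (n - v)" using assms(1) by metis
      then show ?thesis using False by (simp add: fps_X_power_mult_right_nth)
    qed
  qed simp
  finally show ?thesis by (simp add: conv_def)
qed

lemma G_pow_nth: "(G r ^ d) $ n = boxf r d (int n)"
proof (induction d arbitrary: n)
  case 0 then show ?case by (simp add: boxf_def dlt_def)
next
  case (Suc d)
  have "(G r ^ Suc d) $ n = (G r ^ d * G r) $ n" by (simp only: power_Suc2)
  also have "\<dots> = conv r (boxf r d) (int n)"
    by (rule G_mult_nth) (use Suc boxf_neg in auto)
  also have "\<dots> = boxf r (Suc d) (int n)" by (simp add: boxf_def)
  finally show ?case .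
qed

lemma one_minus_X_G: "(1 - fps_X) * G r = 1 - fps_X ^ r"
proof (induction r)
  case 0 then show ?case by (simp add: G_def)
next
  case (Suc r)
  have "G (Suc r) = G r + fps_X ^ r" by (simp add: G_def)
  then have "(1 - fps_X) * G (Suc r) = (1 - fps_X) * G r + (1 - fps_X) * fps_X ^ r"
    by (simp add: algebra_simps)
  also have "\<dots> = 1 - fps_X ^ Suc r" using Suc by (simp add: algebra_simps)
  finally show ?case .
qed

lemma binom_fps: "(1 - (fps_X::int fps) ^ k) ^ d =
   (\<Sum>q\<le>d. fps_const (of_nat (d choose q) * (-1)^q) * fps_X ^ (k*q))"
proof -
  have "(1 - (fps_X::int fps) ^ k) ^ d = (- (fps_X ^ k) + 1) ^ d" by (simp only: diff_conv_add_uminus add.commute)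
  also have "\<dots> = (\<Sum>q\<le>d. of_nat (d choose q) * (- (fps_X ^ k)) ^ q * 1 ^ (d - q))"
    by (rule binomial_ring)
  also have "\<dots> = (\<Sum>q\<le>d. fps_const (of_nat (d choose q) * (-1)^q) * fps_X ^ (k*q))"
  proof (rule sum.cong)
    fix q
    have a1: "(- (fps_X ^ k)) ^ q = (-1) ^ q * (fps_X::int fps) ^ (k*q)"
      unfolding power_mult by (rule power_minus)
    have a2: "fps_const (of_nat (d choose q) * (-1)^q) = fps_const (of_nat (d choose q)) * fps_const ((-1::int)^q)"
      by (rule fps_const_mult[symmetric])
    have a3: "fps_const ((-1::int)^q) = (-1) ^ q"
      by (simp only: fps_const_power[symmetric] fps_const_neg[symmetric] fps_const_1_eq_1)
    have a4: "fps_const (of_nat (d choose q) :: int) = of_nat (d choose q)" by (rule fps_of_nat)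
    show "of_nat (d choose q) * (- (fps_X ^ k)) ^ q * 1 ^ (d - q) =
       fps_const (of_nat (d choose q) * (-1)^q) * (fps_X::int fps) ^ (k*q)"
      unfolding a1 a2 a3 a4 by (simp only: power_one mult_1_right mult.assoc)
  qed simp
  finally show ?thesis .
qed

lemma binom_nth: "(b * (1 - fps_X ^ k) ^ d) $ n =
   (\<Sum>q\<le>d. of_nat (d choose q) * (-1)^q * (if k*q \<le> n then b $ (n - k*q) else 0))"
  for b :: "int fps"
proof -
  have "(b * (1 - fps_X ^ k) ^ d) $ n =
     (\<Sum>q\<le>d. (fps_const (of_nat (d choose q) * (-1)^q) * (b * fps_X ^ (k*q))) $ n)"
    unfolding binom_fps sum_distrib_left fps_sum_nth by (simp only: mult.left_commute)
  also have "\<dots> = (\<Sum>q\<le>d. of_nat (d choose q) * (-1)^q * (if k*q \<le> n then b $ (n - k*q) else 0))"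
    by (rule sum.cong) (auto simp: fps_X_power_mult_right_nth)
  finally show ?thesis .
qed

lemma veronese_nth: "veronese r b $ n = b $ (n * r)"
  by (simp add: veronese_def)

lemma ver_eq:
  assumes "1 \<le> r"
  shows "(a * (1 - fps_X ^ r) ^ d) $ (i*r) = hvec d (veronese r a) i"
proof -
  have "hvec d (veronese r a) i = (veronese r a * (1 - fps_X ^ 1) ^ d) $ i"
    by (simp add: hvec_def)
  also have "\<dots> = (\<Sum>q\<le>d. of_nat (d choose q) * (-1)^q * (if 1*q \<le> i then veronese r a $ (i - 1*q) else 0))"
    by (rule binom_nth)
  also have "\<dots> = (\<Sum>q\<le>d. of_nat (d choose q) * (-1)^q * (if r*q \<le> i*r then a $ (i*r - r*q) else 0))"
  proof (rule sum.cong)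
    fix q
    have "r*q \<le> i*r \<longleftrightarrow> q \<le> i" using assms by (simp add: mult.commute)
    moreover have "(i - q) * r = i*r - r*q" by (metis diff_mult_distrib mult.commute)
    ultimately show "of_nat (d choose q) * (-1)^q * (if 1*q \<le> i then veronese r a $ (i - 1*q) else 0) =
       of_nat (d choose q) * (-1)^q * (if r*q \<le> i*r then a $ (i*r - r*q) else 0)"
      by (simp add: veronese_nth)
  qed simp
  also have "\<dots> = (a * (1 - fps_X ^ r) ^ d) $ (i*r)"
    by (rule binom_nth[symmetric])
  finally show ?thesis by simp
qed

lemma hv_sum:
  assumes H: "a * (1 - fps_X) ^ d = fps_of_poly h" and r: "1 \<le> r" and K: "i*r \<le> K"
  shows "hvec d (veronese r a) i = (\<Sum>j\<le>K. coeff h j * boxf r d (int (i*r) - int j))"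
proof -
  have "(1 - fps_X ^ r) ^ d = (1 - fps_X) ^ d * G r ^ d"
    by (simp add: one_minus_X_G[symmetric] power_mult_distrib)
  then have "a * (1 - fps_X ^ r) ^ d = fps_of_poly h * G r ^ d"
    using H by (simp add: mult.assoc[symmetric])
  then have "hvec d (veronese r a) i = (fps_of_poly h * G r ^ d) $ (i*r)"
    using ver_eq[OF r, of a d i] by simp
  also have "\<dots> = (\<Sum>j=0..i*r. coeff h j * boxf r d (int (i*r - j)))"
    by (simp add: fps_mult_nth G_pow_nth)
  also have "\<dots> = (\<Sum>j\<le>i*r. coeff h j * boxf r d (int (i*r) - int j))"
    by (rule sum.cong) (auto simp: of_nat_diff)
  also have "\<dots> = (\<Sum>j\<le>K. coeff h j * boxf r d (int (i*r) - int j))"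
  proof (rule sum.mono_neutral_left)
    show "\<forall>j\<in>{..K} - {..i*r}. coeff h j * boxf r d (int (i*r) - int j) = 0"
    proof
      fix j assume "j \<in> {..K} - {..i*r}"
      then have "i*r < j" by auto
      then have "int (i*r) < int j" by (simp only: of_nat_less_iff)
      then have "int (i*r) - int j < 0" by simp
      then show "coeff h j * boxf r d (int (i*r) - int j) = 0" by (simp add: boxf_neg)
    qed
  qed (use K in auto)
  finally show ?thesis .
qed



theorem mainTheorem11:
  fixes a :: "int fps" and h :: "int poly" and d :: nat
  assumes "d \<ge> 1"
    and "a * (1 - fps_X) ^ d = fps_of_poly h"
    and "h \<noteq> 0"
    and "\<forall>i \<le> degree h. coeff h i \<ge> 0"
  shows "\<forall>i \<le> d div 2.
           gvec d a i \<le> gvec d (veronese d a) i \<and>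
           (\<forall>r \<ge> d. gvec d (veronese r a) i \<le> gvec d (veronese (Suc r) a) i)"
proof (intro allI impI)
  fix i assume i: "i \<le> d div 2"
  have hnn: "0 \<le> coeff h j" for j
    using assms(4) by (cases "j \<le> degree h") (auto simp: coeff_eq_0)
  have hvec_a: "hvec d a n = coeff h n" for n by (simp add: hvec_def assms(2))
  show "gvec d a i \<le> gvec d (veronese d a) i \<and>
           (\<forall>r \<ge> d. gvec d (veronese r a) i \<le> gvec d (veronese (Suc r) a) i)"
  proof (cases "i = 0")
    case True
    have eq: "gvec d (veronese r a) 0 = gvec d a 0" for r
      by (simp add: gvec_def hvec_def veronese_nth)
    then show ?thesis using True by simp
  next
    case False
    then have i1: "1 \<le> i" and i2: "2*i \<le> d" using i by auto
    have gv: "gvec d (veronese r a) i = (\<Sum>j\<le>K. coeff h j *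
        (boxf r d (int (i*r) - int j) - boxf r d (int ((i-1)*r) - int j)))"
      if r: "1 \<le> r" and K: "i*r \<le> K" for r K
    proof -
      have K': "(i-1)*r \<le> K" using K by (meson diff_le_self dual_order.trans mult_le_mono1)
      have "gvec d (veronese r a) i = hvec d (veronese r a) i - hvec d (veronese r a) (i-1)"
        using False by (simp add: gvec_def)
      also have "\<dots> = (\<Sum>j\<le>K. coeff h j * boxf r d (int (i*r) - int j))
                     - (\<Sum>j\<le>K. coeff h j * boxf r d (int ((i-1)*r) - int j))"
        using hv_sum[OF assms(2) r K] hv_sum[OF assms(2) r K'] by simp
      also have "\<dots> = (\<Sum>j\<le>K. coeff h j *
        (boxf r d (int (i*r) - int j) - boxf r d (int ((i-1)*r) - int j)))"
        by (simp add: sum_subtractf right_diff_distrib)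
      finally show ?thesis .
    qed
    have part1: "gvec d a i \<le> gvec d (veronese d a) i"
    proof -
      have d1: "1 \<le> d" using assms(1) .
      have "gvec d a i = coeff h i - coeff h (i-1)" using False by (simp add: gvec_def hvec_a)
      also have "\<dots> \<le> coeff h i" using hnn[of "i-1"] by simp
      also have "\<dots> \<le> coeff h i * (boxf d d (int (i*d) - int i) - boxf d d (int ((i-1)*d) - int i))"
        using perj_base(2)[OF i1 i2] hnn[of i] by (simp add: mult_le_cancel_left1)
      also have "\<dots> \<le> (\<Sum>j\<le>i*d. coeff h j *
        (boxf d d (int (i*d) - int j) - boxf d d (int ((i-1)*d) - int j)))"
      proof -
        define F where "F j = coeff h j *
          (boxf d d (int (i*d) - int j) - boxf d d (int ((i-1)*d) - int j))" for j
        have "F i \<le> sum F {..i*d}"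
        proof (rule member_le_sum)
          show "i \<in> {..i*d}" using d1 by simp
          show "\<And>x. x \<in> {..i*d} - {i} \<Longrightarrow> 0 \<le> F x"
            unfolding F_def using perj_base(1)[OF i1 i2] hnn by (simp add: mult_nonneg_nonneg)
        qed simp
        then show ?thesis unfolding F_def by simp
      qed
      also have "\<dots> = gvec d (veronese d a) i" using gv[OF d1, of "i*d"] by simp
      finally show ?thesis .
    qed
    have part2: "gvec d (veronese r a) i \<le> gvec d (veronese (Suc r) a) i" if r: "d \<le> r" for r
    proof -
      have r1: "1 \<le> r" using r assms(1) by simp
      have K1: "i*r \<le> i * Suc r" by simp
      have "gvec d (veronese r a) i = (\<Sum>j\<le>i * Suc r. coeff h j *
        (boxf r d (int (i*r) - int j) - boxf r d (int ((i-1)*r) - int j)))"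
        by (rule gv[OF r1 K1])
      also have "\<dots> \<le> (\<Sum>j\<le>i * Suc r. coeff h j *
        (boxf (Suc r) d (int (i*Suc r) - int j) - boxf (Suc r) d (int ((i-1)*Suc r) - int j)))"
        by (rule sum_mono) (use perj_mono[OF r i1 i2] hnn in \<open>simp add: mult_left_mono\<close>)
      also have "\<dots> = gvec d (veronese (Suc r) a) i"
        by (rule gv[symmetric]) auto
      finally show ?thesis .
    qed
    show ?thesis using part1 part2 by blast
  qed
qed


end
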